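(* Let $n\geq 1$ and let $c_1,c_2$ be two $n$-configurations. Let $G_1,G_2$ be groups such that $c_1$ is realisable in $G_1$ and $c_2$ is realisable in $G_2$. Then the join $c_1\wedge c_2$ is realisable in $G_1\times G_2$.
   Context: Write $[n]=\{1,\dots,n\}$. An $n$-configuration is a map $c\colon \mathcal{P}([n])\setminus\{\emptyset\}\to\{0,1\}$. An $n$-configuration $c$ is realisable in a group $G$ if there exist subgroups $H_1,\dots,H_n\leq G$ such that for every non-empty subset $I\subseteq[n]$, the subgroup $\bigcap_{i\in I}H_i$ is finitely generated if and only if $c(I)=0$. The join of two $n$-configurations $c_1,c_2$ is the $n$-configuration $c_1\wedge c_2$ defined by $(c_1\wedge c_2)(I)=0$ if $c_1(I)=0$ and $c_2(I)=0$, and $(c_1\wedge c_2)(I)=1$ otherwise. *)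

theory Defs
  imports "HOL-Algebra.Algebra"
begin

definition fin_gen_subgroup :: "('a, 'b) monoid_scheme \<Rightarrow> 'a set \<Rightarrow> bool" where
  "fin_gen_subgroup G H \<longleftrightarrow> subgroup H G \<and> (\<exists>S. finite S \<and> S \<subseteq> H \<and> generate G S = H)"

text \<open>An n-configuration: a map from nonempty subsets of {1..n} to {0,1}, represented as
  a function on nat sets; only its values on nonempty subsets of {1..n} matter.\<close>
definition is_configuration :: "nat \<Rightarrow> (nat set \<Rightarrow> nat) \<Rightarrow> bool" where
  "is_configuration n c \<longleftrightarrow> (\<forall>I. I \<subseteq> {1..n} \<and> I \<noteq> {} \<longrightarrow> c I \<in> {0, 1})"

definition realisable :: "nat \<Rightarrow> (nat set \<Rightarrow> nat) \<Rightarrow> ('a, 'b) monoid_scheme \<Rightarrow> bool" where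
  "realisable n c G \<longleftrightarrow> (\<exists>H :: nat \<Rightarrow> 'a set.
     (\<forall>i\<in>{1..n}. subgroup (H i) G) \<and>
     (\<forall>I. I \<subseteq> {1..n} \<and> I \<noteq> {} \<longrightarrow>
        (fin_gen_subgroup G (\<Inter>i\<in>I. H i) \<longleftrightarrow> c I = 0)))"

definition config_join :: "(nat set \<Rightarrow> nat) \<Rightarrow> (nat set \<Rightarrow> nat) \<Rightarrow> (nat set \<Rightarrow> nat)" where
  "config_join c1 c2 = (\<lambda>I. if c1 I = 0 \<and> c2 I = 0 then 0 else 1)"

end

theory Submission
  imports Defs
begin

lemma fst_group_hom:
  assumes "group G1" "group G2"
  shows "group_hom (G1 \<times>\<times> G2) G1 fst"
  unfolding group_hom_def group_hom_axioms_def
  using assms DirProd_group by (auto simp: hom_def mult_DirProd')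

lemma snd_group_hom:
  assumes "group G1" "group G2"
  shows "group_hom (G1 \<times>\<times> G2) G2 snd"
  unfolding group_hom_def group_hom_axioms_def
  using assms DirProd_group by (auto simp: hom_def mult_DirProd')

lemma inl_group_hom:
  assumes "group G1" "group G2"
  shows "group_hom G1 (G1 \<times>\<times> G2) (\<lambda>a. (a, \<one>\<^bsub>G2\<^esub>))"
  unfolding group_hom_def group_hom_axioms_def
  using assms DirProd_group by (auto simp: hom_def group.is_monoid)

lemma inr_group_hom:
  assumes "group G1" "group G2"
  shows "group_hom G2 (G1 \<times>\<times> G2) (\<lambda>b. (\<one>\<^bsub>G1\<^esub>, b))"
  unfolding group_hom_def group_hom_axioms_def
  using assms DirProd_group by (auto simp: hom_def group.is_monoid)

lemma fg_prod:
  assumes G1: "group G1" and G2: "group G2" and A: "subgroup A G1" and B: "subgroup B G2"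
  shows "fin_gen_subgroup (G1 \<times>\<times> G2) (A \<times> B) \<longleftrightarrow> fin_gen_subgroup G1 A \<and> fin_gen_subgroup G2 B"
proof
  assume "fin_gen_subgroup (G1 \<times>\<times> G2) (A \<times> B)"
  then obtain S where S: "finite S" "S \<subseteq> A \<times> B" "generate (G1 \<times>\<times> G2) S = A \<times> B"
    unfolding fin_gen_subgroup_def by blast
  have Sc: "S \<subseteq> carrier (G1 \<times>\<times> G2)"
    using S(2) subgroup.subset[OF A] subgroup.subset[OF B] by auto
  have An: "A \<noteq> {}" "B \<noteq> {}" using A B subgroup.one_closed by blast+
  have "generate G1 (fst ` S) = fst ` (A \<times> B)"
    using group_hom.generate_img[OF fst_group_hom[OF G1 G2] Sc] S(3) by simp
  hence 1: "generate G1 (fst ` S) = A" using An by simp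
  have "generate G2 (snd ` S) = snd ` (A \<times> B)"
    using group_hom.generate_img[OF snd_group_hom[OF G1 G2] Sc] S(3) by simp
  hence 2: "generate G2 (snd ` S) = B" using An by simp
  show "fin_gen_subgroup G1 A \<and> fin_gen_subgroup G2 B"
  proof
    show "fin_gen_subgroup G1 A" unfolding fin_gen_subgroup_def
      using A 1 S(1,2) by (intro conjI exI[of _ "fst ` S"]) auto
    show "fin_gen_subgroup G2 B" unfolding fin_gen_subgroup_def
      using B 2 S(1,2) by (intro conjI exI[of _ "snd ` S"]) auto
  qed
next
  assume "fin_gen_subgroup G1 A \<and> fin_gen_subgroup G2 B"
  then obtain S1 S2 where S1: "finite S1" "S1 \<subseteq> A" "generate G1 S1 = A"
    and S2: "finite S2" "S2 \<subseteq> B" "generate G2 S2 = B"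
    unfolding fin_gen_subgroup_def by blast
  define S where "S = (\<lambda>a. (a, \<one>\<^bsub>G2\<^esub>)) ` S1 \<union> (\<lambda>b. (\<one>\<^bsub>G1\<^esub>, b)) ` S2"
  interpret P: group "G1 \<times>\<times> G2" using DirProd_group[OF G1 G2] .
  have AB: "subgroup (A \<times> B) (G1 \<times>\<times> G2)" using DirProd_subgroups[OF G1 A G2 B] .
  have S1c: "S1 \<subseteq> carrier G1" using S1(2) subgroup.subset[OF A] by auto
  have S2c: "S2 \<subseteq> carrier G2" using S2(2) subgroup.subset[OF B] by auto
  have SAB: "S \<subseteq> A \<times> B"
    unfolding S_def using S1(2) S2(2) subgroup.one_closed[OF A] subgroup.one_closed[OF B]
    by auto
  have Sc: "S \<subseteq> carrier (G1 \<times>\<times> G2)"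
    using SAB subgroup.subset[OF AB] by auto
  have sub1: "generate (G1 \<times>\<times> G2) S \<subseteq> A \<times> B"
    using P.generate_subgroup_incl[OF SAB AB] .
  have gs: "subgroup (generate (G1 \<times>\<times> G2) S) (G1 \<times>\<times> G2)"
    using P.generate_is_subgroup[OF Sc] .
  have L: "(\<lambda>a. (a, \<one>\<^bsub>G2\<^esub>)) ` A \<subseteq> generate (G1 \<times>\<times> G2) S"
  proof -
    have "(\<lambda>a. (a, \<one>\<^bsub>G2\<^esub>)) ` A = generate (G1 \<times>\<times> G2) ((\<lambda>a. (a, \<one>\<^bsub>G2\<^esub>)) ` S1)"
      using group_hom.generate_img[OF inl_group_hom[OF G1 G2] S1c] S1(3) by simp
    also have "\<dots> \<subseteq> generate (G1 \<times>\<times> G2) S"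
      by (rule P.mono_generate) (auto simp: S_def)
    finally show ?thesis .
  qed
  have R: "(\<lambda>b. (\<one>\<^bsub>G1\<^esub>, b)) ` B \<subseteq> generate (G1 \<times>\<times> G2) S"
  proof -
    have "(\<lambda>b. (\<one>\<^bsub>G1\<^esub>, b)) ` B = generate (G1 \<times>\<times> G2) ((\<lambda>b. (\<one>\<^bsub>G1\<^esub>, b)) ` S2)"
      using group_hom.generate_img[OF inr_group_hom[OF G1 G2] S2c] S2(3) by simp
    also have "\<dots> \<subseteq> generate (G1 \<times>\<times> G2) S"
      by (rule P.mono_generate) (auto simp: S_def)
    finally show ?thesis .
  qed
  have sub2: "A \<times> B \<subseteq> generate (G1 \<times>\<times> G2) S"
  proof (clarify)
    fix a b assume ab: "a \<in> A" "b \<in> B"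
    have "(a, \<one>\<^bsub>G2\<^esub>) \<otimes>\<^bsub>G1 \<times>\<times> G2\<^esub> (\<one>\<^bsub>G1\<^esub>, b) \<in> generate (G1 \<times>\<times> G2) S"
    proof (rule subgroup.m_closed[OF gs])
      show "(a, \<one>\<^bsub>G2\<^esub>) \<in> generate (G1 \<times>\<times> G2) S" using L ab by blast
      show "(\<one>\<^bsub>G1\<^esub>, b) \<in> generate (G1 \<times>\<times> G2) S" using R ab by blast
    qed
    moreover have "a \<in> carrier G1" "b \<in> carrier G2"
      using ab subgroup.subset[OF A] subgroup.subset[OF B] by auto
    ultimately show "(a, b) \<in> generate (G1 \<times>\<times> G2) S"
      using G1 G2 by (simp add: group.is_monoid)
  qed
  have "finite S" unfolding S_def using S1(1) S2(1) by simp
  then show "fin_gen_subgroup (G1 \<times>\<times> G2) (A \<times> B)"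
    unfolding fin_gen_subgroup_def using AB SAB sub1 sub2 by blast
qed

theorem lemma2p7:
  fixes G1 :: "('a, 'c) monoid_scheme" and G2 :: "('b, 'd) monoid_scheme"
    and c1 c2 :: "nat set \<Rightarrow> nat" and n :: nat
  assumes "n \<ge> 1"
    and "is_configuration n c1" and "is_configuration n c2"
    and "group G1" and "group G2"
    and "realisable n c1 G1" and "realisable n c2 G2"
  shows "realisable n (config_join c1 c2) (G1 \<times>\<times> G2)"
proof -
  obtain H where H: "\<forall>i\<in>{1..n}. subgroup (H i) G1"
    "\<forall>I. I \<subseteq> {1..n} \<and> I \<noteq> {} \<longrightarrow> (fin_gen_subgroup G1 (\<Inter>i\<in>I. H i) \<longleftrightarrow> c1 I = 0)"
    using assms(6) unfolding realisable_def by blast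
  obtain K where K: "\<forall>i\<in>{1..n}. subgroup (K i) G2"
    "\<forall>I. I \<subseteq> {1..n} \<and> I \<noteq> {} \<longrightarrow> (fin_gen_subgroup G2 (\<Inter>i\<in>I. K i) \<longleftrightarrow> c2 I = 0)"
    using assms(7) unfolding realisable_def by blast
  show ?thesis unfolding realisable_def
  proof (intro exI[of _ "\<lambda>i. H i \<times> K i"] conjI allI impI ballI)
    fix i assume "i \<in> {1..n}"
    then show "subgroup (H i \<times> K i) (G1 \<times>\<times> G2)"
      using DirProd_subgroups[OF assms(4) _ assms(5)] H(1) K(1) by blast
  next
    fix I assume I: "I \<subseteq> {1..n} \<and> I \<noteq> {}"
    have eq: "(\<Inter>i\<in>I. H i \<times> K i) = (\<Inter>i\<in>I. H i) \<times> (\<Inter>i\<in>I. K i)"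
      using I by blast
    have sA: "subgroup (\<Inter>i\<in>I. H i) G1"
      using group.subgroups_Inter[OF assms(4), of "H ` I"] I H(1) by blast
    have sB: "subgroup (\<Inter>i\<in>I. K i) G2"
      using group.subgroups_Inter[OF assms(5), of "K ` I"] I K(1) by blast
    show "fin_gen_subgroup (G1 \<times>\<times> G2) (\<Inter>i\<in>I. H i \<times> K i) \<longleftrightarrow> config_join c1 c2 I = 0"
      unfolding eq fg_prod[OF assms(4,5) sA sB] config_join_def
      using H(2) K(2) I by auto
  qed
qed

end
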